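(* The functional $\tilde J:\mathcal F\times[0,+\infty)\to\mathbb{R}$, $\tilde J(f,c)=\frac12c^3I_1(f)-\frac12c^2gAI_2(f)$, has a unique global minimum at $(\mathrm{id},\frac23gA)$, where $\mathrm{id}(y)=y$.
   Context: $g>0$, $A\in(0,1)$ constants. $\mathcal F$ is the set of $f\in\mathcal C^1([-1,1])$ with $f(\pm1)=\pm1$, $f'(\pm1)>0$, $f(y)\in(-1,1)$ and $f(-y)=-f(y)$ for $y\in(-1,1)$. For $f\in\mathcal F$ let $F(y):=\int_{-1}^yf'(s)s\,ds$, $I_1(f):=\int_0^1\frac{F(y)^2}{1-f(y)^2}\,dy$ and $I_2(f):=\int_0^1(1-f(y))y\,dy$. *)

theory Defs
  imports "HOL-Analysis.Analysis"
begin

definition fder :: "(real \<Rightarrow> real) \<Rightarrow> real \<Rightarrow> real" where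
  "fder f y = vector_derivative f (at y within {-1..1})"

definition C1_on_interval :: "(real \<Rightarrow> real) \<Rightarrow> bool" where
  "C1_on_interval f \<longleftrightarrow>
     (\<forall>y\<in>{-1..1}. f differentiable (at y within {-1..1})) \<and>
     continuous_on {-1..1} (fder f)"

definition FF :: "(real \<Rightarrow> real) set" where
  "FF = {f. C1_on_interval f \<and> f (-1) = -1 \<and> f 1 = 1 \<and> fder f (-1) > 0 \<and> fder f 1 > 0 \<and>
          (\<forall>y\<in>{-1<..<1}. f y \<in> {-1<..<1} \<and> f (-y) = - f y)}"

definition Fprim :: "(real \<Rightarrow> real) \<Rightarrow> real \<Rightarrow> real" where
  "Fprim f y = integral {-1..y} (\<lambda>s. fder f s * s)"

definition I1 :: "(real \<Rightarrow> real) \<Rightarrow> real" where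
  "I1 f = integral {0..1} (\<lambda>y. (Fprim f y)\<^sup>2 / (1 - (f y)\<^sup>2))"

definition I2 :: "(real \<Rightarrow> real) \<Rightarrow> real" where
  "I2 f = integral {0..1} (\<lambda>y. (1 - f y) * y)"

definition Jt :: "real \<Rightarrow> real \<Rightarrow> (real \<Rightarrow> real) \<Rightarrow> real \<Rightarrow> real" where
  "Jt g A f c = 1/2 * c^3 * I1 f - 1/2 * c^2 * g * A * I2 f"

end

theory Submission
  imports Defs
begin

lemma FF_basic:
  assumes "f \<in> FF"
  shows "\<And>y. y \<in> {-1..1} \<Longrightarrow> (f has_real_derivative fder f y) (at y within {-1..1})"
    and "continuous_on {-1..1} f"
    and "continuous_on {-1..1} (fder f)"
    and "\<And>y. y \<in> {-1..1} \<Longrightarrow> -1 \<le> f y \<and> f y \<le> 1"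
    and "\<And>y. y \<in> {-1..1} \<Longrightarrow> f (-y) = - f y"
    and "\<And>y. y \<in> {-1<..<1} \<Longrightarrow> -1 < f y \<and> f y < 1"
    and "f 1 = 1" "f (-1) = -1" "fder f 1 > 0"
proof -
  have C: "C1_on_interval f" and e: "f (-1) = -1" "f 1 = 1" "fder f 1 > 0"
    and i: "\<forall>y\<in>{-1<..<1}. f y \<in> {-1<..<1} \<and> f (-y) = - f y"
    using assms unfolding FF_def by auto
  show D: "(f has_real_derivative fder f y) (at y within {-1..1})" if "y \<in> {-1..1}" for y
    using C that unfolding C1_on_interval_def fder_def
    by (simp add: has_real_derivative_iff_has_vector_derivative vector_derivative_works[symmetric])
  show "continuous_on {-1..1} f"
    using D by (meson DERIV_continuous continuous_on_eq_continuous_within)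
  show "continuous_on {-1..1} (fder f)" using C unfolding C1_on_interval_def by simp
  show "-1 \<le> f y \<and> f y \<le> 1" if "y \<in> {-1..1}" for y
  proof (cases "y = 1 \<or> y = -1")
    case True then show ?thesis using e by auto
  next
    case False then have "y \<in> {-1<..<1}" using that by auto
    then show ?thesis using i by fastforce
  qed
  show "f (-y) = - f y" if "y \<in> {-1..1}" for y
  proof (cases "y = 1 \<or> y = -1")
    case True then show ?thesis using e by auto
  next
    case False then have "y \<in> {-1<..<1}" using that by auto
    then show ?thesis using i by fastforce
  qed
  show "-1 < f y \<and> f y < 1" if "y \<in> {-1<..<1}" for y using i that by auto
  show "f 1 = 1" "f (-1) = -1" "fder f 1 > 0" using e by auto
qed

lemma FF_int_odd:
  assumes "f \<in> FF"
  shows "(f has_integral 0) {-1..1}"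
proof -
  note B = FF_basic[OF assms]
  have fi: "f integrable_on {-1..1}" using B(2) by (rule integrable_continuous_interval)
  have "integral {-1..1} (\<lambda>x. f (-x)) = integral {-1..1} f"
    using Henstock_Kurzweil_Integration.integral_reflect_real[of 1 "-1" f] by simp
  moreover have "integral {-1..1} (\<lambda>x. f (-x)) = integral {-1..1} (\<lambda>x. - f x)"
    by (rule integral_cong) (use B(5) in auto)
  moreover have "integral {-1..1} (\<lambda>x. - f x) = - integral {-1..1} f"
    by (rule integral_neg)
  ultimately have "integral {-1..1} f = 0" by simp
  then show ?thesis using fi by (metis has_integral_integrable_integral)
qed

lemma FF_prod_deriv:
  assumes "f \<in> FF" "y \<in> {-1..1}"
  shows "((\<lambda>s. s * f s) has_real_derivative (f y + y * fder f y)) (at y within {-1..1})"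
proof -
  note B = FF_basic[OF assms(1)]
  show ?thesis using B(1)[OF assms(2)]
    by (auto intro!: derivative_eq_intros)
qed

lemma Fprim_deriv:
  assumes "f \<in> FF" "y \<in> {-1..1}"
  shows "(Fprim f has_real_derivative (fder f y * y)) (at y within {-1..1})"
proof -
  note B = FF_basic[OF assms(1)]
  have c: "continuous_on {-1..1} (\<lambda>s. fder f s * s)"
    using B(3) by (intro continuous_intros)
  show ?thesis
    using integral_has_vector_derivative[OF c assms(2)]
    unfolding Fprim_def has_real_derivative_iff_has_vector_derivative by simp
qed

lemma Fprim_cont: "f \<in> FF \<Longrightarrow> continuous_on {-1..1} (Fprim f)"
  using Fprim_deriv by (meson DERIV_continuous continuous_on_eq_continuous_within)

lemma Fprim_1:
  assumes "f \<in> FF"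
  shows "Fprim f 1 = 0"
proof -
  note B = FF_basic[OF assms(1)]
  have "((\<lambda>s. f s + s * fder f s) has_integral (1 * f 1 - (-1) * f (-1))) {-1..1}"
    using fundamental_theorem_of_calculus[of "-1" 1 "\<lambda>s. s * f s" "\<lambda>s. f s + s * fder f s"]
      FF_prod_deriv[OF assms] by (simp add: has_real_derivative_iff_has_vector_derivative)
  then have h: "((\<lambda>s. f s + s * fder f s) has_integral 0) {-1..1}" using B by simp
  have "((\<lambda>s. (f s + s * fder f s) - f s) has_integral (0 - 0)) {-1..1}"
    by (rule has_integral_diff[OF h FF_int_odd[OF assms]])
  then have "((\<lambda>s. fder f s * s) has_integral 0) {-1..1}" by (simp add: mult.commute)
  then show ?thesis unfolding Fprim_def by (simp add: integral_unique)
qed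

lemma Fprim_int:
  assumes "f \<in> FF"
  shows "(Fprim f has_integral (- 2 * I2 f)) {0..1}"
proof -
  note B = FF_basic[OF assms(1)]
  have sub: "{0..1} \<subseteq> {-1..(1::real)}" by auto
  have d1: "((\<lambda>y. y * Fprim f y) has_vector_derivative (Fprim f y + y * (fder f y * y))) (at y within {0..1})"
    if "y \<in> {0..1}" for y
  proof -
    have "y \<in> {-1..1}" using that by auto
    from DERIV_subset[OF Fprim_deriv[OF assms this] sub]
    show ?thesis unfolding has_real_derivative_iff_has_vector_derivative[symmetric]
      by (auto intro!: derivative_eq_intros)
  qed
  have A: "((\<lambda>y. Fprim f y + y * (fder f y * y)) has_integral (1 * Fprim f 1 - 0 * Fprim f 0)) {0..1}"
    by (rule fundamental_theorem_of_calculus) (use d1 in auto)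
  have d2: "((\<lambda>y. y^2 * f y) has_vector_derivative (2 * y * f y + y^2 * fder f y)) (at y within {0..1})"
    if "y \<in> {0..1}" for y
  proof -
    have "y \<in> {-1..1}" using that by auto
    from DERIV_subset[OF B(1)[OF this] sub]
    show ?thesis unfolding has_real_derivative_iff_has_vector_derivative[symmetric]
      by (auto intro!: derivative_eq_intros)
  qed
  have Bi: "((\<lambda>y. 2 * y * f y + y^2 * fder f y) has_integral (1^2 * f 1 - 0^2 * f 0)) {0..1}"
    by (rule fundamental_theorem_of_calculus) (use d2 in auto)
  have cI: "continuous_on {0..1} (\<lambda>y. (1 - f y) * y)"
    using continuous_on_subset[OF B(2) sub] by (intro continuous_intros)
  have C: "((\<lambda>y. (1 - f y) * y) has_integral I2 f) {0..1}"
    unfolding I2_def using integrable_continuous_interval[OF cI] by (simp add: has_integral_integrable_integral)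
  have D: "((\<lambda>y. y) has_integral (1/2)) {0..(1::real)}"
    using ident_has_integral[of 0 "1::real"] by simp
  have "((\<lambda>y. (Fprim f y + y * (fder f y * y)) - (2 * y * f y + y^2 * fder f y) + 2 * y - 2 * ((1 - f y) * y))
     has_integral ((1 * Fprim f 1 - 0 * Fprim f 0) - (1^2 * f 1 - 0^2 * f 0) + 2 * (1/2) - 2 * I2 f)) {0..1}"
    by (intro has_integral_diff has_integral_add has_integral_mult_right A Bi C D)
  then show ?thesis using Fprim_1[OF assms] B(7)
    by (simp add: algebra_simps power2_eq_square)
qed

lemma Fprim_near1:
  assumes "f \<in> FF"
  shows "\<exists>y0. 0 \<le> y0 \<and> y0 < 1 \<and> (\<forall>y\<in>{y0..1}. 0 \<le> - Fprim f y \<and> - Fprim f y \<le> 1 - f y)"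
proof -
  note B = FF_basic[OF assms(1)]
  have "continuous (at 1 within {-1..1}) (fder f)"
    using B(3) by (simp add: continuous_on_eq_continuous_within)
  then have "(fder f \<longlongrightarrow> fder f 1) (at 1 within {-1..1})"
    by (simp add: continuous_within)
  from order_tendstoD(1)[OF this B(9)]
  have "eventually (\<lambda>y. 0 < fder f y) (at 1 within {-1..1})" .
  then obtain d where d: "d > 0" "\<And>y. y \<in> {-1..1} \<Longrightarrow> y \<noteq> 1 \<Longrightarrow> dist y 1 < d \<Longrightarrow> 0 < fder f y"
    unfolding eventually_at by blast
  define y0 where "y0 = max 0 (1 - d/2)"
  have pos: "0 \<le> fder f s" if "s \<in> {y0..1}" for s
  proof (cases "s = 1")
    case True then show ?thesis using B(9) by simp
  next
    case False
    then show ?thesis using d(2)[of s] that d(1) unfolding y0_def dist_real_def by auto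
  qed
  have y00: "0 \<le> y0" unfolding y0_def by auto
  have "\<forall>y\<in>{y0..1}. 0 \<le> - Fprim f y \<and> - Fprim f y \<le> 1 - f y"
  proof
    fix y assume y: "y \<in> {y0..1}"
    then have y1: "-1 \<le> y" "y \<le> 1" unfolding y0_def by auto
    have ci: "continuous_on {-1..1} (\<lambda>s. fder f s * s)"
      using B(3) by (intro continuous_intros)
    have "integral {-1..1} (\<lambda>s. fder f s * s) = integral {-1..y} (\<lambda>s. fder f s * s) + integral {y..1} (\<lambda>s. fder f s * s)"
      by (rule Henstock_Kurzweil_Integration.integral_combine[symmetric]) (use y1 integrable_continuous_interval[OF ci] in auto)
    then have e1: "- Fprim f y = integral {y..1} (\<lambda>s. fder f s * s)"
      using Fprim_1[OF assms] unfolding Fprim_def by simp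
    have int1: "((\<lambda>s. fder f s * s) has_integral (- Fprim f y)) {y..1}"
      unfolding e1 using integrable_continuous_interval[OF continuous_on_subset[OF ci]] y1
      by (simp add: has_integral_integrable_integral)
    have int2: "(fder f has_integral (f 1 - f y)) {y..1}"
    proof (rule fundamental_theorem_of_calculus)
      show "y \<le> 1" by fact
      fix x assume x: "x \<in> {y..1}"
      then have "x \<in> {-1..1}" using y1 by auto
      from DERIV_subset[OF B(1)[OF this]] y1
      show "(f has_vector_derivative fder f x) (at x within {y..1})"
        by (simp add: has_real_derivative_iff_has_vector_derivative[symmetric])
    qed
    have "0 \<le> - Fprim f y"
      by (rule has_integral_nonneg[OF int1]) (use pos y y00 in \<open>auto intro!: mult_nonneg_nonneg\<close>)
    moreover have "- Fprim f y \<le> f 1 - f y"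
    proof (rule has_integral_le[OF int1 int2])
      fix s assume s: "s \<in> {y..1}"
      then have "0 \<le> fder f s" "s \<le> 1" using pos y by auto
      then show "fder f s * s \<le> fder f s"
        using mult_left_le by blast
    qed
    ultimately show "0 \<le> - Fprim f y \<and> - Fprim f y \<le> 1 - f y" using B(7) by simp
  qed
  moreover have "0 \<le> y0" "y0 < 1" unfolding y0_def using d(1) by auto
  ultimately show ?thesis by blast
qed

lemma Q_bound:
  fixes G x :: real
  assumes "0 \<le> G" "G \<le> 1 - x" "-1 < x" "x \<le> 1"
  shows "0 \<le> G^2 / (1 - x^2) \<and> G^2 / (1 - x^2) \<le> (1 - x) / (1 + x)"
proof (cases "x = 1")
  case True then show ?thesis by (simp add: power2_eq_square)
next
  case False
  then have p1: "1 - x > 0" "1 + x > 0" using assms by auto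
  have e: "1 - x^2 = (1 - x) * (1 + x)" by (simp add: algebra_simps power2_eq_square)
  have "G^2 \<le> (1 - x)^2" using assms by (intro power_mono) auto
  then have "G^2 / (1 - x^2) \<le> (1 - x)^2 / ((1 - x) * (1 + x))"
    unfolding e using p1 by (intro divide_right_mono) auto
  also have "\<dots> = (1 - x) / (1 + x)" using p1 by (simp add: power2_eq_square)
  finally show ?thesis using p1 unfolding e by auto
qed

lemma Q_cont:
  assumes "f \<in> FF"
  shows "continuous_on {0..1} (\<lambda>y. (Fprim f y)^2 / (1 - (f y)^2))"
proof -
  note B = FF_basic[OF assms(1)]
  have sub: "{0..1} \<subseteq> {-1..(1::real)}" by auto
  have cf: "continuous_on {0..1} f" using continuous_on_subset[OF B(2) sub] .
  have cF: "continuous_on {0..1} (Fprim f)" using continuous_on_subset[OF Fprim_cont[OF assms] sub] .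
  obtain y0 where y0: "0 \<le> y0" "y0 < 1" "\<And>y. y\<in>{y0..1} \<Longrightarrow> 0 \<le> - Fprim f y \<and> - Fprim f y \<le> 1 - f y"
    using Fprim_near1[OF assms] by blast
  have gt: "-1 < f y" if "y \<in> {0..1}" for y
  proof (cases "y = 1")
    case True then show ?thesis using B(7) by simp
  next
    case False then show ?thesis using B(6)[of y] that by auto
  qed
  show ?thesis unfolding continuous_on_eq_continuous_within
  proof
    fix y :: real assume y: "y \<in> {0..1}"
    show "continuous (at y within {0..1}) (\<lambda>y. (Fprim f y)^2 / (1 - (f y)^2))"
    proof (cases "y = 1")
      case False
      then have "y \<in> {-1<..<1}" using y by auto
      then have "-1 < f y" "f y < 1" using B(6) by auto
      then have "(f y)^2 < 1" by (simp add: abs_square_less_1)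
      then have nz: "1 - (f y)^2 \<noteq> 0" by simp
      have "continuous (at y within {0..1}) f" "continuous (at y within {0..1}) (Fprim f)"
        using cf cF y by (auto simp: continuous_on_eq_continuous_within)
      then show ?thesis using nz by (intro continuous_intros) auto
    next
      case True
      have fl: "(f \<longlongrightarrow> f 1) (at 1 within {0..1})"
        using cf unfolding continuous_on_eq_continuous_within continuous_within by auto
      have lim0: "((\<lambda>y. (1 - f y) / (1 + f y)) \<longlongrightarrow> (1 - f 1) / (1 + f 1)) (at 1 within {0..1})"
        using B(7) by (intro tendsto_intros fl) auto
      then have lim: "((\<lambda>y. (1 - f y) / (1 + f y)) \<longlongrightarrow> 0) (at 1 within {0..1})" using B(7) by simp
      have ev: "eventually (\<lambda>y. y \<in> {y0..1}) (at 1 within {0..1::real})"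
        unfolding eventually_at using y0(2)
        by (intro exI[of _ "1 - y0"]) (auto simp: dist_real_def)
      have bnd: "eventually (\<lambda>y. 0 \<le> (Fprim f y)^2 / (1 - (f y)^2) \<and> (Fprim f y)^2 / (1 - (f y)^2) \<le> (1 - f y) / (1 + f y)) (at 1 within {0..1})"
        using ev
      proof eventually_elim
        case (elim y)
        then have "y \<in> {0..1}" using y0(1) by auto
        have "0 \<le> (- Fprim f y)^2 / (1 - (f y)^2) \<and> (- Fprim f y)^2 / (1 - (f y)^2) \<le> (1 - f y) / (1 + f y)"
          by (rule Q_bound) (use y0(3)[OF elim] gt[OF \<open>y \<in> {0..1}\<close>] B(4)[of y] \<open>y \<in> {0..1}\<close> in auto)
        then show ?case by simp
      qed
      have "((\<lambda>y. (Fprim f y)^2 / (1 - (f y)^2)) \<longlongrightarrow> 0) (at 1 within {0..1})"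
        by (rule tendsto_sandwich[OF _ _ tendsto_const lim]) (use bnd in \<open>auto elim: eventually_mono\<close>)
      then show ?thesis using True B(7) unfolding continuous_within by simp
    qed
  qed
qed

lemma phi_pos:
  assumes "f \<in> FF" "y \<in> {0..<1}"
  shows "0 < 1 - (f y)^2"
proof -
  note B = FF_basic[OF assms(1)]
  have "-1 < f y" "f y < 1" using B(6)[of y] assms(2) by auto
  then have "(f y)^2 < 1" by (simp add: abs_square_less_1)
  then show ?thesis by simp
qed

lemma phi_nonneg:
  assumes "f \<in> FF" "y \<in> {-1..1}"
  shows "0 \<le> 1 - (f y)^2"
proof -
  note B = FF_basic[OF assms(1)]
  have "-1 \<le> f y" "f y \<le> 1" using B(4)[OF assms(2)] by auto
  then have "(f y)^2 \<le> 1" by (simp add: abs_square_le_1)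
  then show ?thesis by simp
qed

lemma I1_int:
  assumes "f \<in> FF"
  shows "((\<lambda>y. (Fprim f y)^2 / (1 - (f y)^2)) has_integral I1 f) {0..1}"
  unfolding I1_def using integrable_continuous_interval[OF Q_cont[OF assms]]
  by (simp add: has_integral_integrable_integral)

lemma phi_int:
  assumes "f \<in> FF"
  shows "((\<lambda>y. 1 - (f y)^2) has_integral integral {0..1} (\<lambda>y. 1 - (f y)^2)) {0..1}"
proof -
  note B = FF_basic[OF assms(1)]
  have sub: "{0..1} \<subseteq> {-1..(1::real)}" by auto
  have "continuous_on {0..1} (\<lambda>y. 1 - (f y)^2)"
    using continuous_on_subset[OF B(2) sub] by (intro continuous_intros)
  then show ?thesis using integrable_continuous_interval by (simp add: has_integral_integrable_integral)
qed

lemma CS_step: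
  assumes "f \<in> FF" "a > 0"
  shows "4 * I2 f \<le> a * I1 f + integral {0..1} (\<lambda>y. 1 - (f y)^2) / a"
proof -
  have L: "((\<lambda>y. -2 * Fprim f y) has_integral (-2 * (- 2 * I2 f))) {0..1}"
    by (intro has_integral_mult_right Fprim_int[OF assms(1)])
  have R: "((\<lambda>y. a * ((Fprim f y)^2 / (1 - (f y)^2)) + (1 - (f y)^2) / a) has_integral
       (a * I1 f + integral {0..1} (\<lambda>y. 1 - (f y)^2) / a)) {0..1}"
    by (intro has_integral_add has_integral_mult_right has_integral_divide I1_int[OF assms(1)] phi_int[OF assms(1)])
  have "-2 * (- 2 * I2 f) \<le> a * I1 f + integral {0..1} (\<lambda>y. 1 - (f y)^2) / a"
  proof (rule has_integral_le[OF L R])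
    fix y :: real assume y: "y \<in> {0..1}"
    show "-2 * Fprim f y \<le> a * ((Fprim f y)^2 / (1 - (f y)^2)) + (1 - (f y)^2) / a"
    proof (cases "y = 1")
      case True then show ?thesis using Fprim_1[OF assms(1)] FF_basic(7)[OF assms(1)] by simp
    next
      case False
      then have p: "0 < 1 - (f y)^2" using phi_pos[OF assms(1)] y by auto
      define F where "F = Fprim f y"
      define ph where "ph = 1 - (f y)^2"
      have "0 \<le> (a * F + ph)^2 / (a * ph)" using p assms(2) unfolding ph_def by simp
      also have "(a * F + ph)^2 / (a * ph) = a * (F^2 / ph) + ph / a + 2 * F"
        using p assms(2) unfolding ph_def[symmetric] by (simp add: field_simps power2_eq_square)
      finally show ?thesis unfolding F_def[symmetric] ph_def[symmetric] by simp
    qed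
  qed
  then show ?thesis by simp
qed

lemma I1_nonneg: "f \<in> FF \<Longrightarrow> 0 \<le> I1 f"
proof (rule has_integral_nonneg[OF I1_int])
  fix y :: real assume "f \<in> FF" "y \<in> {0..1}"
  then show "0 \<le> (Fprim f y)^2 / (1 - (f y)^2)" using phi_nonneg[of f y] by auto
qed

lemma B0_nonneg: "f \<in> FF \<Longrightarrow> 0 \<le> integral {0..1} (\<lambda>y. 1 - (f y)^2)"
proof (rule has_integral_nonneg[OF phi_int])
  fix y :: real assume "f \<in> FF" "y \<in> {0..1}"
  then show "0 \<le> 1 - (f y)^2" using phi_nonneg[of f y] by auto
qed

lemma PB_step:
  assumes "f \<in> FF" "I2 f > 0"
  shows "4 * (I2 f)^2 \<le> I1 f * integral {0..1} (\<lambda>y. 1 - (f y)^2)"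
proof -
  define m where "m = I2 f"
  define P where "P = I1 f"
  define B0 where "B0 = integral {0..1} (\<lambda>y. 1 - (f y)^2)"
  have m: "m > 0" using assms m_def by simp
  have P: "P \<ge> 0" using I1_nonneg[OF assms(1)] P_def by simp
  have B: "B0 \<ge> 0" using B0_nonneg[OF assms(1)] B0_def by simp
  have cs: "\<And>a. a > 0 \<Longrightarrow> 4 * m \<le> a * P + B0 / a"
    using CS_step[OF assms(1)] unfolding m_def P_def B0_def by blast
  show ?thesis
  proof (cases "B0 > 0")
    case True
    have "4 * m \<le> (B0 / (2*m)) * P + B0 / (B0 / (2*m))" using cs[of "B0 / (2*m)"] True m by simp
    also have "B0 / (B0 / (2*m)) = 2 * m" using True m by simp
    finally have "2 * m \<le> (B0 / (2*m)) * P" by simp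
    then have "2 * m * (2 * m) \<le> B0 * P" using m by (simp add: field_simps)
    then show ?thesis unfolding m_def[symmetric] P_def[symmetric] B0_def[symmetric]
      by (simp add: power2_eq_square algebra_simps)
  next
    case False
    then have B0: "B0 = 0" using B by simp
    have "4 * m \<le> (m / (P + 1)) * P" using cs[of "m / (P+1)"] m P B0 by simp
    also have "(m / (P + 1)) * P \<le> m" using m P by (simp add: field_simps)
    finally show ?thesis using m by simp
  qed
qed

lemma I2_int:
  assumes "f \<in> FF"
  shows "((\<lambda>y. (1 - f y) * y) has_integral I2 f) {0..1}"
proof -
  note B = FF_basic[OF assms(1)]
  have sub: "{0..1} \<subseteq> {-1..(1::real)}" by auto
  have cI: "continuous_on {0..1} (\<lambda>y. (1 - f y) * y)"
    using continuous_on_subset[OF B(2) sub] by (intro continuous_intros)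
  show ?thesis
    unfolding I2_def using integrable_continuous_interval[OF cI] by (simp add: has_integral_integrable_integral)
qed

lemma sq_int:
  fixes l :: real
  shows "((\<lambda>y. (1 - l * y / 2)^2) has_integral (1 - l/2 + l^2/12)) {0..1}"
proof -
  have "((\<lambda>y. (1 - l * y / 2)^2) has_integral ((\<lambda>y. y - l * y^2 / 2 + l^2 * y^3 / 12) 1 - (\<lambda>y. y - l * y^2 / 2 + l^2 * y^3 / 12) 0)) {0..1}"
  proof (rule fundamental_theorem_of_calculus)
    fix x :: real assume "x \<in> {0..1}"
    have "((\<lambda>y. y - l * y^2 / 2 + l^2 * y^3 / 12) has_real_derivative (1 - l * x / 2)^2) (at x within {0..1})"
      by (auto intro!: derivative_eq_intros simp: power2_eq_square power3_eq_cube field_simps)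
    then show "((\<lambda>y. y - l * y^2 / 2 + l^2 * y^3 / 12) has_vector_derivative (1 - l * x / 2)^2) (at x within {0..1})"
      by (simp add: has_real_derivative_iff_has_vector_derivative)
  qed simp
  then show ?thesis by simp
qed

lemma unclipped:
  assumes "f \<in> FF"
  shows "((\<lambda>y. (f y - l * y / 2)^2) has_integral
     (l * I2 f + (1 - l/2 + l^2/12) - integral {0..1} (\<lambda>y. 1 - (f y)^2))) {0..1}"
proof -
  have "((\<lambda>y. l * ((1 - f y) * y) + (1 - l * y / 2)^2 - (1 - (f y)^2)) has_integral
     (l * I2 f + (1 - l/2 + l^2/12) - integral {0..1} (\<lambda>y. 1 - (f y)^2))) {0..1}"
    by (intro has_integral_diff has_integral_add has_integral_mult_right I2_int[OF assms] sq_int phi_int[OF assms])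
  then show ?thesis
    by (rule has_integral_eq[rotated]) (simp add: power2_eq_square algebra_simps)
qed

lemma clip_int:
  fixes t :: real
  assumes "0 < t" "t \<le> 1"
  shows "((\<lambda>y. (max 0 (1 - y / t))^2) has_integral (t / 3)) {0..1}"
proof -
  have A: "((\<lambda>y. (1 - y / t)^2) has_integral ((\<lambda>y. - (t/3) * (1 - y/t)^3) t - (\<lambda>y. - (t/3) * (1 - y/t)^3) 0)) {0..t}"
  proof (rule fundamental_theorem_of_calculus)
    fix x :: real assume "x \<in> {0..t}"
    have "((\<lambda>y. - (t/3) * (1 - y/t)^3) has_real_derivative (1 - x / t)^2) (at x within {0..t})"
      using assms by (auto intro!: derivative_eq_intros simp: power2_eq_square power3_eq_cube field_simps)
    then show "((\<lambda>y. - (t/3) * (1 - y/t)^3) has_vector_derivative (1 - x / t)^2) (at x within {0..t})"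
      by (simp add: has_real_derivative_iff_has_vector_derivative)
  qed (use assms in simp)
  moreover have "- (t/3) * (1 - t/t)^3 - - (t/3) * (1-0/t)^3 = t/3" using assms by simp
  ultimately have A0: "((\<lambda>y. (1 - y / t)^2) has_integral (t/3)) {0..t}" by metis
  have A': "((\<lambda>y. (max 0 (1 - y / t))^2) has_integral (t/3)) {0..t}"
  proof (rule has_integral_eq[OF _ A0])
    fix x assume "x \<in> {0..t}"
    then have "x / t \<le> 1" using assms by (simp add: field_simps)
    then show "(1 - x / t)^2 = (max 0 (1 - x / t))^2" by simp
  qed
  have "((\<lambda>y. 0::real) has_integral 0) {t..1}" by simp
  then have B': "((\<lambda>y. (max 0 (1 - y / t))^2) has_integral 0) {t..1}"
    by (rule has_integral_eq[rotated]) (use assms in \<open>auto simp: field_simps\<close>)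
  show ?thesis using has_integral_combine[OF _ _ A' B'] assms by simp
qed

lemma clipped:
  assumes "f \<in> FF" "0 < t" "t < 1"
  shows "integral {0..1} (\<lambda>y. 1 - (f y)^2) < (2/t) * I2 f + t/3"
proof -
  note B = FF_basic[OF assms(1)]
  have sub: "{0..1} \<subseteq> {-1..(1::real)}" by auto
  define E where "E y = (2/t) * ((1 - f y) * y) + (max 0 (1 - y/t))^2 - (1 - (f y)^2)" for y
  define V where "V = (2/t) * I2 f + t/3 - integral {0..1} (\<lambda>y. 1 - (f y)^2)"
  have EI: "(E has_integral V) {0..1}"
    unfolding E_def V_def
    by (intro has_integral_diff has_integral_add has_integral_mult_right I2_int[OF assms(1)]
        clip_int phi_int[OF assms(1)]) (use assms in auto)
  have Epos: "0 \<le> E y" if y: "y \<in> {0..1}" for y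
  proof (cases "y \<le> t")
    case True
    then have "y / t \<le> 1" using assms by (simp add: field_simps)
    then have mx: "max 0 (1 - y/t) = 1 - y/t" by simp
    have "E y = (f y - (2/t) * y / 2)^2" unfolding E_def mx
      using assms(2) by (simp add: power2_eq_square field_simps)
    then show ?thesis by simp
  next
    case False
    then have "1 < y / t" using assms by (simp add: field_simps)
    then have m0: "max 0 (1 - y/t) = 0" by simp
    have "-1 \<le> f y" "f y \<le> 1" using B(4)[of y] y by auto
    moreover have "2 \<le> 2 * (y / t)" using \<open>1 < y / t\<close> by simp
    ultimately have "0 \<le> (1 - f y) * (2 * (y/t) - 1 - f y)" by (intro mult_nonneg_nonneg) auto
    also have "(1 - f y) * (2 * (y/t) - 1 - f y) = E y" unfolding E_def m0
      using assms(2) by (simp add: power2_eq_square field_simps)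
    finally show ?thesis .
  qed
  have V0: "0 \<le> V" by (rule has_integral_nonneg[OF EI]) (use Epos in auto)
  have "V \<noteq> 0"
  proof
    assume "V = 0"
    have cE: "continuous_on {0..1} E"
      unfolding E_def using continuous_on_subset[OF B(2) sub] by (intro continuous_intros) (use assms in auto)
    define y where "y = (1 + t) / 2"
    have y: "y \<in> {0..1}" "t < y" "y < 1" using assms unfolding y_def by auto
    have "E y = 0"
      by (rule has_integral_0_cbox_imp_0[of 0 1 E]) (use cE Epos EI \<open>V = 0\<close> y in auto)
    moreover have "0 < E y"
    proof -
      have "1 < y / t" using y assms by (simp add: field_simps)
      then have m0: "max 0 (1 - y/t) = 0" by simp
      have "-1 < f y" "f y < 1" using B(6)[of y] y by auto
      moreover have "2 < 2 * (y / t)" using \<open>1 < y / t\<close> by simp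
      ultimately have "0 < (1 - f y) * (2 * (y/t) - 1 - f y)" by (intro mult_pos_pos) auto
      also have "(1 - f y) * (2 * (y/t) - 1 - f y) = E y" unfolding E_def m0
        using assms(2) by (simp add: power2_eq_square field_simps)
      finally show ?thesis .
    qed
    ultimately show False by simp
  qed
  with V0 have "0 < V" by simp
  then show ?thesis unfolding V_def by simp
qed

lemma I2_le1:
  assumes "f \<in> FF"
  shows "I2 f \<le> 1"
proof -
  have D: "((\<lambda>y. 2 * y) has_integral (2 * (1/2))) {0..(1::real)}"
    using has_integral_mult_right[OF ident_has_integral[of 0 "1::real"], of 2] by simp
  have "I2 f \<le> 2 * (1/2)"
  proof (rule has_integral_le[OF I2_int[OF assms] D])
    fix y :: real assume y: "y \<in> {0..1}"
    then have "-1 \<le> f y" using FF_basic(4)[OF assms, of y] by auto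
    then show "(1 - f y) * y \<le> 2 * y" using y by (intro mult_right_mono) auto
  qed
  then show ?thesis by simp
qed

lemma poly1:
  fixes m :: real
  assumes "1/6 \<le> m" "m \<le> 1"
  shows "(1 - 3/4 * (1 - 2*m)^2)^2 \<le> 8 * m / 3 \<and> (m \<noteq> 1/6 \<longrightarrow> (1 - 3/4 * (1 - 2*m)^2)^2 < 8 * m / 3)"
proof -
  define x where "x = 1 - 2 * m"
  have x: "x \<le> 2/3" "-1 \<le> x" using assms unfolding x_def by auto
  have e: "48 * (8 * m / 3 - (1 - 3/4 * (1 - 2*m)^2)^2) = (3*x - 2)^2 * (2 - 3*x) * (2 + x)"
    unfolding x_def by (simp add: power2_eq_square algebra_simps)
  have "0 \<le> (3*x - 2)^2 * (2 - 3*x) * (2 + x)" using x by (intro mult_nonneg_nonneg) auto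
  moreover have "m \<noteq> 1/6 \<Longrightarrow> 0 < (3*x - 2)^2 * (2 - 3*x) * (2 + x)"
  proof -
    assume "m \<noteq> 1/6"
    then have "x \<noteq> 2/3" unfolding x_def by auto
    then have "x < 2/3" using x by auto
    then show ?thesis using x by (intro mult_pos_pos) auto
  qed
  ultimately show ?thesis using e by auto
qed

lemma aux16:
  fixes m Q :: real
  assumes "m > 0"
  shows "16*m^4 \<le> Q*(8*m/3) \<longleftrightarrow> 6*m^3 \<le> Q" "16*m^4 < Q*(8*m/3) \<longleftrightarrow> 6*m^3 < Q"
proof -
  have e: "Q*(8*m/3) - 16*m^4 = (8*m/3)*(Q - 6*m^3)"
    by (simp add: field_simps power4_eq_xxxx power3_eq_cube)
  have p: "8*m/3 > 0" using assms by simp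
  have "16*m^4 \<le> Q*(8*m/3) \<longleftrightarrow> 0 \<le> (8*m/3)*(Q - 6*m^3)" using e by linarith
  also have "\<dots> \<longleftrightarrow> 0 \<le> Q - 6*m^3" using p by (simp add: zero_le_mult_iff)
  finally show "16*m^4 \<le> Q*(8*m/3) \<longleftrightarrow> 6*m^3 \<le> Q" by simp
  have "16*m^4 < Q*(8*m/3) \<longleftrightarrow> 0 < (8*m/3)*(Q - 6*m^3)" using e by linarith
  also have "\<dots> \<longleftrightarrow> 0 < Q - 6*m^3" using p by (simp add: zero_less_mult_iff)
  finally show "16*m^4 < Q*(8*m/3) \<longleftrightarrow> 6*m^3 < Q" by simp
qed

lemma key:
  assumes "f \<in> FF" "I2 f > 0"
  shows "6 * (I2 f)^3 \<le> (I1 f)^2 \<and> ((I1 f)^2 = 6 * (I2 f)^3 \<longrightarrow> (\<forall>y\<in>{0..1}. f y = y))"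
proof -
  define m where "m = I2 f"
  define P where "P = I1 f"
  define B0 where "B0 = integral {0..1} (\<lambda>y. 1 - (f y)^2)"
  have m: "m > 0" using assms m_def by simp
  have m1: "m \<le> 1" using I2_le1[OF assms(1)] m_def by simp
  have P: "P \<ge> 0" using I1_nonneg[OF assms(1)] P_def by simp
  have B: "B0 \<ge> 0" using B0_nonneg[OF assms(1)] B0_def by simp
  have PB: "4 * m^2 \<le> P * B0" using PB_step[OF assms] unfolding m_def P_def B0_def by simp
  have "0 < P * B0" using PB m by (smt (verit) zero_less_power)
  then have Ppos: "P > 0" using P B by (metis mult_eq_0_iff order_le_less zero_less_mult_pos2 mult.commute)
  have sq: "16 * m^4 \<le> P^2 * B0^2"
  proof -
    have "(4 * m^2)^2 \<le> (P * B0)^2" using PB m by (intro power_mono) auto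
    then show ?thesis by (simp add: power_mult_distrib power2_eq_square power4_eq_xxxx algebra_simps)
  qed
  show ?thesis
  proof (cases "1/6 \<le> m")
    case True
    define l where "l = 3 - 6 * m"
    define K where "K = 1 - 3/4 * (1 - 2*m)^2"
    have Kdef: "l * m + (1 - l/2 + l^2/12) = K" unfolding l_def K_def by (simp add: power2_eq_square field_simps)
    have DI: "((\<lambda>y. (f y - l * y / 2)^2) has_integral (K - B0)) {0..1}"
      using unclipped[OF assms(1), of l] unfolding m_def[symmetric] B0_def[symmetric] Kdef .
    have "0 \<le> K - B0" by (rule has_integral_nonneg[OF DI]) auto
    then have BK: "B0 \<le> K" by simp
    have pk: "K^2 \<le> 8 * m / 3" "m \<noteq> 1/6 \<Longrightarrow> K^2 < 8 * m / 3" using poly1[OF True m1] unfolding K_def by auto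
    have B2: "B0^2 \<le> K^2" using BK B by (intro power_mono) auto
    have "P^2 * B0^2 \<le> P^2 * (8 * m / 3)"
      using mult_left_mono[OF order_trans[OF B2 pk(1)], of "P^2"] by simp
    then have "16 * m^4 \<le> P^2 * (8 * m / 3)" using sq by linarith
    then have ineq: "6 * m^3 \<le> P^2" using aux16(1)[OF m, of "P^2"] by blast
    moreover have "P^2 = 6 * m^3 \<longrightarrow> (\<forall>y\<in>{0..1}. f y = y)"
    proof
      assume eq: "P^2 = 6 * m^3"
      have P2: "P^2 > 0" using Ppos by simp
      have "m = 1/6"
      proof (rule ccontr)
        assume "m \<noteq> 1/6"
        then have "K^2 < 8 * m / 3" by (rule pk(2))
        then have "B0^2 < 8 * m / 3" using B2 by simp
        then have "P^2 * B0^2 < P^2 * (8 * m / 3)" using P2 by simp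
        then have "16 * m^4 < P^2 * (8 * m / 3)" using sq by linarith
        then show False using aux16(2)[OF m, of "P^2"] eq by simp
      qed
      then have l2: "l = 2" unfolding l_def by simp
      have "B0 = K"
      proof (rule ccontr)
        assume "B0 \<noteq> K"
        then have "B0 < K" using BK by simp
        then have "B0^2 < K^2" using B by (intro power_strict_mono) auto
        then have "P^2 * B0^2 < P^2 * K^2" using P2 by simp
        then have "16 * m^4 < P^2 * (8 * m / 3)" using sq pk(1) P2
          by (smt (verit) mult_left_mono)
        then show False using aux16(2)[OF m, of "P^2"] eq by simp
      qed
      then have DI0: "((\<lambda>y. (f y - l * y / 2)^2) has_integral 0) {0..1}" using DI by simp
      have cD: "continuous_on {0..1} (\<lambda>y. (f y - l * y / 2)^2)"
        using continuous_on_subset[OF FF_basic(2)[OF assms(1)], of "{0..1}"] by (intro continuous_intros) auto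
      show "\<forall>y\<in>{0..1}. f y = y"
      proof
        fix y :: real assume y: "y \<in> {0..1}"
        have "(f y - l * y / 2)^2 = 0"
          by (rule has_integral_0_cbox_imp_0[of 0 1 "\<lambda>y. (f y - l * y / 2)^2"]) (use cD DI0 y in auto)
        then show "f y = y" using l2 by simp
      qed
    qed
    ultimately show ?thesis unfolding m_def P_def by simp
  next
    case False
    define t where "t = sqrt (6 * m)"
    have t: "0 < t" "t < 1" using m False unfolding t_def by (auto simp: real_sqrt_lt_1_iff)
    have t2: "t^2 = 6 * m" unfolding t_def using m by simp
    have BK: "B0 < (2/t) * m + t/3" using clipped[OF assms(1) t] unfolding m_def B0_def by simp
    have K: "(2/t) * m + t/3 = 2 * t / 3" using t t2 by (simp add: field_simps power2_eq_square)
    have "B0^2 < (2 * t / 3)^2" using BK K B by (intro power_strict_mono) auto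
    also have "(2 * t / 3)^2 = 8 * m / 3" using t2 by (simp add: power_divide power_mult_distrib)
    finally have "P^2 * B0^2 < P^2 * (8 * m / 3)" using Ppos by simp
    then have "16 * m^4 < P^2 * (8 * m / 3)" using sq by linarith
    then have "6 * m^3 < P^2" using aux16(2)[OF m, of "P^2"] by blast
    then show ?thesis unfolding m_def P_def by simp
  qed
qed

lemma fder_id: "y \<in> {-1..1} \<Longrightarrow> fder id y = 1"
  unfolding fder_def id_def by (rule vector_derivative_at_within_ivl) auto

lemma id_FF: "id \<in> FF"
proof -
  have "continuous_on {-1..1} (fder id)"
    by (rule continuous_on_eq[OF continuous_on_const[of _ 1]]) (simp add: fder_id)
  moreover have "\<forall>y\<in>{-1..1}. id differentiable (at y within {-1..1})"
    unfolding id_def by simp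
  ultimately show ?thesis unfolding FF_def C1_on_interval_def by (auto simp: fder_id)
qed

lemma Fprim_id: "y \<in> {-1..1} \<Longrightarrow> Fprim id y = (y^2 - 1) / 2"
proof -
  assume y: "y \<in> {-1..1}"
  have "integral {-1..y} (\<lambda>s. fder id s * s) = integral {-1..y} (\<lambda>s. s)"
    by (rule integral_cong) (use y in \<open>auto simp: fder_id\<close>)
  also have "\<dots> = (y^2 - (-1)^2) / 2" using ident_has_integral[of "-1" y] y by (simp add: integral_unique)
  finally show ?thesis unfolding Fprim_def by simp
qed

lemma I1_id: "I1 id = 1/6"
proof -
  have "((\<lambda>y::real. (1 - y^2) / 4) has_integral ((\<lambda>y. (y - y^3/3)/4) 1 - (\<lambda>y. (y - y^3/3)/4) 0)) {0..1}"
  proof (rule fundamental_theorem_of_calculus)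
    fix x :: real assume "x \<in> {0..1}"
    have "((\<lambda>y. (y - y^3/3)/4) has_real_derivative (1 - x^2) / 4) (at x within {0..1})"
      by (auto intro!: derivative_eq_intros simp: power2_eq_square field_simps)
    then show "((\<lambda>y. (y - y^3/3)/4) has_vector_derivative (1 - x^2) / 4) (at x within {0..1})"
      by (simp add: has_real_derivative_iff_has_vector_derivative)
  qed simp
  then have h: "((\<lambda>y::real. (1 - y^2) / 4) has_integral (1/6)) {0..1}" by simp
  have "((\<lambda>y. (Fprim id y)^2 / (1 - (id y)^2)) has_integral (1/6)) {0..1}"
  proof (rule has_integral_eq[OF _ h])
    fix y :: real assume y: "y \<in> {0..1}"
    then have F: "Fprim id y = (y^2 - 1) / 2" by (intro Fprim_id) auto
    show "(1 - y^2) / 4 = (Fprim id y)^2 / (1 - (id y)^2)"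
    proof (cases "y = 1")
      case True then show ?thesis using F by simp
    next
      case False
      then have "y^2 < 1" using y by (simp add: abs_square_less_1)
      then have "1 - y^2 \<noteq> 0" by simp
      then show ?thesis unfolding F by (simp add: field_simps power2_eq_square)
    qed
  qed
  then show ?thesis unfolding I1_def by (simp add: integral_unique)
qed

lemma I2_id: "I2 id = 1/6"
proof -
  have "((\<lambda>y::real. (1 - y) * y) has_integral ((\<lambda>y. y^2/2 - y^3/3) 1 - (\<lambda>y. y^2/2 - y^3/3) 0)) {0..1}"
  proof (rule fundamental_theorem_of_calculus)
    fix x :: real assume "x \<in> {0..1}"
    have "((\<lambda>y. y^2/2 - y^3/3) has_real_derivative (1 - x) * x) (at x within {0..1})"
      by (auto intro!: derivative_eq_intros simp: power2_eq_square field_simps)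
    then show "((\<lambda>y. y^2/2 - y^3/3) has_vector_derivative (1 - x) * x) (at x within {0..1})"
      by (simp add: has_real_derivative_iff_has_vector_derivative)
  qed simp
  then show ?thesis unfolding I2_def by (simp add: integral_unique)
qed

lemma J_alg:
  fixes k P m c :: real
  assumes k: "k > 0" and m: "m > 0" and P: "P \<ge> 0" and PM: "6*m^3 \<le> P^2" and c: "c \<ge> 0"
  shows "-(k^3)/81 \<le> 1/2*c^3*P - 1/2*c^2*k*m"
    and "1/2*c^3*P - 1/2*c^2*k*m = -(k^3)/81 \<Longrightarrow> c > 0 \<and> P^2 = 6*m^3 \<and> c^3 * P = 4*k^3/81"
proof -
  define X where "X = c^2*k*m"
  define Y where "Y = c^3*P"
  define Z where "Z = 2*k^3/81"
  have X0: "X \<ge> 0" unfolding X_def using k m c by simp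
  have Y0: "Y \<ge> 0" unfolding Y_def using P c by simp
  have Z0: "Z > 0" unfolding Z_def using k by simp
  have X3: "X^3 = c^6*k^3*m^3" unfolding X_def by (simp add: power_mult_distrib flip: power_mult)
  have YZ: "27/4*Y^2*Z = c^6*k^3*(P^2/6)" unfolding Y_def Z_def by (simp add: power_mult_distrib flip: power_mult)
  have ck: "c^6*k^3 \<ge> 0" using c k by simp
  have XYZ: "X^3 \<le> 27/4*Y^2*Z" unfolding X3 YZ using PM ck by (intro mult_left_mono) auto
  have id3: "(Y+Z)^3 - 27/4*Y^2*Z = (Y - 2*Z)^2 * (Y + Z/4)"
    by (simp add: power2_eq_square power3_eq_cube algebra_simps)
  have "0 \<le> (Y - 2*Z)^2 * (Y + Z/4)" using Y0 Z0 by simp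
  then have YZ3: "27/4*Y^2*Z \<le> (Y+Z)^3" using id3 by simp
  have "X^Suc 2 \<le> (Y + Z)^Suc 2" using XYZ YZ3 by (simp add: numeral_3_eq_3[symmetric])
  then have "X \<le> Y + Z"
    by (rule power_le_imp_le_base) (use Y0 Z0 in auto)
  have J: "1/2*c^3*P - 1/2*c^2*k*m = (Y - X)/2" unfolding X_def Y_def by simp
  show "-(k^3)/81 \<le> 1/2*c^3*P - 1/2*c^2*k*m" unfolding J using \<open>X \<le> Y + Z\<close> unfolding Z_def by simp
  assume eq: "1/2*c^3*P - 1/2*c^2*k*m = -(k^3)/81"
  then have XE: "X = Y + Z" unfolding J Z_def by simp
  then have "(Y+Z)^3 \<le> 27/4*Y^2*Z" using XYZ by simp
  then have e1: "27/4*Y^2*Z = (Y+Z)^3" and e2: "X^3 = 27/4*Y^2*Z" using YZ3 XYZ XE by auto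
  then have "(Y - 2*Z)^2 * (Y + Z/4) = 0" using id3 by simp
  moreover have "Y + Z/4 > 0" using Y0 Z0 by simp
  ultimately have "(Y - 2*Z)^2 = 0" by simp
  then have Y2: "Y = 2*Z" by simp
  have cpos: "c > 0"
  proof (rule ccontr)
    assume "\<not> c > 0"
    then have "c = 0" using c by simp
    then have "X = 0" "Y = 0" unfolding X_def Y_def by auto
    then show False using XE Z0 by simp
  qed
  have "c^6*k^3*m^3 = c^6*k^3*(P^2/6)" using e2 unfolding X3 YZ .
  moreover have "c^6*k^3 > 0" using cpos k by simp
  ultimately have "m^3 = P^2/6" using cpos k by simp
  then have "P^2 = 6*m^3" by simp
  moreover have "c^3 * P = 4*k^3/81" using Y2 unfolding Y_def Z_def by simp
  ultimately show "c > 0 \<and> P^2 = 6*m^3 \<and> c^3 * P = 4*k^3/81" using cpos by simp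
qed

theorem lemma4p3:
  fixes g A :: real
  assumes "g > 0" and "0 < A" and "A < 1"
  shows "id \<in> FF \<and>
    (\<forall>f\<in>FF. \<forall>c\<ge>0. Jt g A id (2/3 * g * A) \<le> Jt g A f c \<and>
       (Jt g A f c = Jt g A id (2/3 * g * A) \<longrightarrow>
          (\<forall>y\<in>{-1..1}. f y = y) \<and> c = 2/3 * g * A))"
proof -
  define k where "k = g * A"
  have k: "k > 0" unfolding k_def using assms by simp
  have Jid: "Jt g A id (2/3 * g * A) = -(k^3)/81"
    unfolding Jt_def I1_id I2_id k_def by (simp add: power3_eq_cube power2_eq_square field_simps)
  have Jf: "Jt g A f c = 1/2*c^3*I1 f - 1/2*c^2*k*I2 f" for f c
    unfolding Jt_def k_def by (simp add: algebra_simps)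
  have main: "Jt g A id (2/3 * g * A) \<le> Jt g A f c \<and>
       (Jt g A f c = Jt g A id (2/3 * g * A) \<longrightarrow> (\<forall>y\<in>{-1..1}. f y = y) \<and> c = 2/3 * g * A)"
    if f: "f \<in> FF" and c: "c \<ge> 0" for f c
  proof -
  have Jfc: "Jt g A f c = 1/2*c^3*I1 f - 1/2*c^2*k*I2 f" by (rule Jf)
  show ?thesis
  proof (cases "I2 f > 0")
    case False
    have "0 \<le> 1/2*c^3*I1 f" using I1_nonneg[OF f] c by simp
    moreover have "1/2*c^2*k*I2 f \<le> 0" using False k c
      by (simp add: mult_nonneg_nonpos)
    moreover have "-(k^3)/81 < 0" using k by simp
    ultimately have "Jt g A id (2/3 * g * A) < Jt g A f c" unfolding Jid Jfc by linarith
    then show ?thesis by simp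
  next
    case True
    note K = key[OF f True]
    have ineq: "-(k^3)/81 \<le> 1/2*c^3*I1 f - 1/2*c^2*k*I2 f"
      by (rule J_alg(1)[OF k True I1_nonneg[OF f] conjunct1[OF K] c])
    moreover have "(\<forall>y\<in>{-1..1}. f y = y) \<and> c = 2/3 * g * A" if eq: "Jt g A f c = Jt g A id (2/3 * g * A)"
    proof -
      have "c > 0 \<and> (I1 f)^2 = 6*(I2 f)^3 \<and> c^3 * I1 f = 4*k^3/81"
        by (rule J_alg(2)[OF k True I1_nonneg[OF f] conjunct1[OF K] c]) (use eq Jid Jfc in linarith)
      then have cp: "c > 0" and PE: "(I1 f)^2 = 6*(I2 f)^3" and cP: "c^3 * I1 f = 4*k^3/81" by auto
      have f01: "\<forall>y\<in>{0..1}. f y = y" using K PE by blast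
      have "I2 f = I2 id" unfolding I2_def by (rule integral_cong) (use f01 in auto)
      then have m: "I2 f = 1/6" using I2_id by simp
      have "(I1 f)^2 = (1/6)^2" using PE m by (simp add: power2_eq_square power3_eq_cube)
      then have P: "I1 f = 1/6" using I1_nonneg[OF f] by (simp add: power2_eq_iff)
      have "c^3 = (2/3*k)^3" using cP P by (simp add: power_mult_distrib field_simps)
      then have "c = 2/3*k" by (rule power_eq_imp_eq_base) (use c k in auto)
      moreover have "\<forall>y\<in>{-1..1}. f y = y"
      proof
        fix y :: real assume y: "y \<in> {-1..1}"
        show "f y = y"
        proof (cases "0 \<le> y")
          case True then show ?thesis using f01 y by auto
        next
          case False
          then have "-y \<in> {0..1}" using y by auto
          then have "f (-y) = -y" using f01 by blast
          moreover have "f (- (-y)) = - f (-y)" by (rule FF_basic(5)[OF f]) (use y in auto)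
          ultimately show ?thesis by simp
        qed
      qed
      ultimately show ?thesis unfolding k_def by simp
    qed
    ultimately show ?thesis unfolding Jid Jfc by blast
  qed
  qed
  show ?thesis using id_FF main by blast
qed

end
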